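(* Let $\mathcal{A}$ be a Banach algebra and $X$ a Banach $\mathcal{A}$-bimodule with left module action $\pi_\ell:\mathcal{A}\times X\to X$. Suppose that $X^*$ factors on the left with respect to $\mathcal{A}$, i.e. every $x'\in X^*$ can be written as $x'=y'a$ for some $y'\in X^*$ and $a\in\mathcal{A}$. If $a\cdot a''\in Z_1(\pi_\ell)$ for all $a\in\mathcal{A}$ and $a''\in\mathcal{A}^{**}$, then $Z_1(\pi_\ell)=\mathcal{A}^{**}$.
   Context: For $x'\in X^*$ and $a\in\mathcal{A}$, $x'a\in X^*$ is defined by $\langle x'a,x\rangle=\langle x',\pi_\ell(a,x)\rangle$. For a bounded bilinear map $m:X_1\times Y\to Z$ between Banach spaces, define $m^*:Z^*\times X_1\to Y^*$ by $\langle m^*(z',x),y\rangle=\langle z',m(x,y)\rangle$, $m^{**}:Y^{**}\times Z^*\to X_1^*$ by $\langle m^{**}(y'',z'),x\rangle=\langle y'',m^*(z',x)\rangle$, and $m^{***}:X_1^{**}\times Y^{**}\to Z^{**}$ by $\langle m^{***}(x'',y''),z'\rangle=\langle x'',m^{**}(y'',z')\rangle$. The first topological center of $\pi_\ell$ is $Z_1(\pi_\ell)=\{a''\in\mathcal{A}^{**}: x''\mapsto\pi_\ell^{***}(a'',x'')\text{ is weak}^*\text{-to-weak}^*\text{ continuous on }X^{**}\}$. $\mathcal{A}^{**}$ carries the first Arens product: for $a,b\in\mathcal{A}$, $a'\in\mathcal{A}^*$, $a'',b''\in\mathcal{A}^{**}$, $\langle a'a,b\rangle=\langle a',ab\rangle$,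 $\langle b''a',a\rangle=\langle b'',a'a\rangle$, $\langle a''\cdot b'',a'\rangle=\langle a'',b''a'\rangle$; $\mathcal{A}$ is embedded canonically in $\mathcal{A}^{**}$. *)

theory Defs
  imports "HOL-Analysis.Analysis"
begin

text \<open>Weak-star topology on a dual space: topology of pointwise convergence
  (the pullback of the product topology under evaluation).\<close>
definition weak_star_topology :: "('b::real_normed_vector \<Rightarrow>\<^sub>L real) topology" where
  "weak_star_topology = pullback_topology UNIV blinfun_apply euclidean"

definition banach_bimodule ::
  "('a::{real_normed_algebra,banach} \<Rightarrow> 'x::banach \<Rightarrow> 'x) \<Rightarrow> ('x \<Rightarrow> 'a \<Rightarrow> 'x) \<Rightarrow> bool" where
  "banach_bimodule pl pr \<longleftrightarrow>
     bounded_bilinear pl \<and> bounded_bilinear pr \<and>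
     (\<forall>a b x. pl (a * b) x = pl a (pl b x)) \<and>
     (\<forall>a b x. pr x (a * b) = pr (pr x a) b) \<and>
     (\<forall>a b x. pl a (pr x b) = pr (pl a x) b)"

definition dual_right_act ::
  "('a \<Rightarrow> 'x::real_normed_vector \<Rightarrow> 'x) \<Rightarrow> ('x \<Rightarrow>\<^sub>L real) \<Rightarrow> 'a \<Rightarrow> ('x \<Rightarrow>\<^sub>L real)" where
  "dual_right_act pl x' a = Blinfun (\<lambda>x. blinfun_apply x' (pl a x))"

definition arens_star ::
  "('x1 \<Rightarrow> 'y::real_normed_vector \<Rightarrow> 'z::real_normed_vector) \<Rightarrow> ('z \<Rightarrow>\<^sub>L real) \<Rightarrow> 'x1 \<Rightarrow> ('y \<Rightarrow>\<^sub>L real)" where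
  "arens_star m z' x = Blinfun (\<lambda>y. blinfun_apply z' (m x y))"

definition arens_star2 ::
  "('x1::real_normed_vector \<Rightarrow> 'y::real_normed_vector \<Rightarrow> 'z::real_normed_vector) \<Rightarrow>
   (('y \<Rightarrow>\<^sub>L real) \<Rightarrow>\<^sub>L real) \<Rightarrow> ('z \<Rightarrow>\<^sub>L real) \<Rightarrow> ('x1 \<Rightarrow>\<^sub>L real)" where
  "arens_star2 m y'' z' = Blinfun (\<lambda>x. blinfun_apply y'' (arens_star m z' x))"

definition arens_star3 ::
  "('x1::real_normed_vector \<Rightarrow> 'y::real_normed_vector \<Rightarrow> 'z::real_normed_vector) \<Rightarrow>
   (('x1 \<Rightarrow>\<^sub>L real) \<Rightarrow>\<^sub>L real) \<Rightarrow> (('y \<Rightarrow>\<^sub>L real) \<Rightarrow>\<^sub>L real) \<Rightarrow> (('z \<Rightarrow>\<^sub>L real) \<Rightarrow>\<^sub>L real)" where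
  "arens_star3 m x'' y'' = Blinfun (\<lambda>z'. blinfun_apply x'' (arens_star2 m y'' z'))"

definition topological_center1 ::
  "('x1::real_normed_vector \<Rightarrow> 'y::real_normed_vector \<Rightarrow> 'z::real_normed_vector) \<Rightarrow>
   (('x1 \<Rightarrow>\<^sub>L real) \<Rightarrow>\<^sub>L real) set" where
  "topological_center1 m = {a''. continuous_map weak_star_topology weak_star_topology
                                    (\<lambda>y''. arens_star3 m a'' y'')}"

definition canon :: "'a::real_normed_vector \<Rightarrow> (('a \<Rightarrow>\<^sub>L real) \<Rightarrow>\<^sub>L real)" where
  "canon a = Blinfun (\<lambda>a'. blinfun_apply a' a)"

definition functional_mult :: "('a::real_normed_algebra \<Rightarrow>\<^sub>L real) \<Rightarrow> 'a \<Rightarrow> ('a \<Rightarrow>\<^sub>L real)" where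
  "functional_mult a' a = Blinfun (\<lambda>b. blinfun_apply a' (a * b))"

definition bidual_functional_mult ::
  "(('a::real_normed_algebra \<Rightarrow>\<^sub>L real) \<Rightarrow>\<^sub>L real) \<Rightarrow> ('a \<Rightarrow>\<^sub>L real) \<Rightarrow> ('a \<Rightarrow>\<^sub>L real)" where
  "bidual_functional_mult b'' a' = Blinfun (\<lambda>a. blinfun_apply b'' (functional_mult a' a))"

definition arens1 ::
  "(('a::real_normed_algebra \<Rightarrow>\<^sub>L real) \<Rightarrow>\<^sub>L real) \<Rightarrow> (('a \<Rightarrow>\<^sub>L real) \<Rightarrow>\<^sub>L real) \<Rightarrow> (('a \<Rightarrow>\<^sub>L real) \<Rightarrow>\<^sub>L real)" where
  "arens1 a'' b'' = Blinfun (\<lambda>a'. blinfun_apply a'' (bidual_functional_mult b'' a'))"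

end

theory Submission
  imports Defs
begin

lemma ws_eq: "weak_star_topology = strong_operator_topology"
  unfolding weak_star_topology_def strong_operator_topology_def by simp

lemma gen_apply:
  assumes "bounded_bilinear g"
  shows "blinfun_apply (Blinfun (\<lambda>x. blinfun_apply a (g z x))) = (\<lambda>x. a (g z x))"
proof -
  have "bounded_linear (g z)" using bounded_bilinear.bounded_linear_right[OF assms] .
  then have "bounded_linear (\<lambda>x. blinfun_apply a (g z x))"
    using bounded_linear_compose[OF blinfun.bounded_linear_right] by blast
  then show ?thesis by (rule bounded_linear_Blinfun_apply)
qed

lemma gen_bil:
  assumes "bounded_bilinear g"
  shows "bounded_bilinear (\<lambda>a z. Blinfun (\<lambda>x. blinfun_apply a (g z x)))"
proof -
  have eq: "(\<lambda>a z. Blinfun (\<lambda>x. blinfun_apply a (g z x))) = (\<lambda>a z. a o\<^sub>L bounded_bilinear.prod_right g z)"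
    by (intro ext blinfun_eqI) (simp add: gen_apply[OF assms] bounded_bilinear.prod_right.rep_eq[OF assms])
  have "bounded_bilinear (\<lambda>a z. a o\<^sub>L bounded_bilinear.prod_right g z)"
    using bounded_bilinear.comp[OF bounded_bilinear_blinfun_compose bounded_linear_ident
          bounded_bilinear.bounded_linear_prod_right[OF assms]] .
  then show ?thesis unfolding eq by simp
qed

theorem theorem2p1:
  fixes pl :: "'a::{real_normed_algebra,banach} \<Rightarrow> 'x::banach \<Rightarrow> 'x"
    and pr :: "'x \<Rightarrow> 'a \<Rightarrow> 'x"
  assumes bimod: "banach_bimodule pl pr"
    and factors: "\<forall>x'::'x \<Rightarrow>\<^sub>L real. \<exists>y' a. x' = dual_right_act pl y' a"
    and center: "\<forall>(a::'a) a''. arens1 (canon a) a'' \<in> topological_center1 pl"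
  shows "topological_center1 pl = UNIV"
proof -
  have bpl: "bounded_bilinear pl" and assoc: "\<And>a b x. pl (a * b) x = pl a (pl b x)"
    using bimod unfolding banach_bimodule_def by auto
  have e1: "arens_star pl = (\<lambda>a z. Blinfun (\<lambda>x. blinfun_apply a (pl z x)))"
    by (intro ext) (simp add: arens_star_def)
  have b1: "bounded_bilinear (arens_star pl)" unfolding e1 by (rule gen_bil[OF bpl])
  have a1: "\<And>z' c y. blinfun_apply (arens_star pl z' c) y = z' (pl c y)"
    unfolding e1 by (simp add: gen_apply[OF bpl])
  have e2: "arens_star2 pl = (\<lambda>a z. Blinfun (\<lambda>x. blinfun_apply a (arens_star pl z x)))"
    by (intro ext) (simp add: arens_star2_def)
  have b2: "bounded_bilinear (arens_star2 pl)" unfolding e2 by (rule gen_bil[OF b1])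
  have a2: "\<And>y'' z' c. blinfun_apply (arens_star2 pl y'' z') c = y'' (arens_star pl z' c)"
    unfolding e2 by (simp add: gen_apply[OF b1])
  have e3: "arens_star3 pl = (\<lambda>a z. Blinfun (\<lambda>x. blinfun_apply a (arens_star2 pl z x)))"
    by (intro ext) (simp add: arens_star3_def)
  have a3: "\<And>x'' y'' z'. blinfun_apply (arens_star3 pl x'' y'') z' = x'' (arens_star2 pl y'' z')"
    unfolding e3 by (simp add: gen_apply[OF b2])
  have bm: "bounded_bilinear ((*) :: 'a \<Rightarrow> 'a \<Rightarrow> 'a)" by (rule bounded_bilinear_mult)
  have f1: "functional_mult = (\<lambda>a z. Blinfun (\<lambda>x. blinfun_apply a (z * x)))"
    by (intro ext) (simp add: functional_mult_def)
  have bf1: "bounded_bilinear (functional_mult :: ('a \<Rightarrow>\<^sub>L real) \<Rightarrow> 'a \<Rightarrow> _)"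
    unfolding f1 by (rule gen_bil[OF bm])
  have af1: "\<And>(a'::'a \<Rightarrow>\<^sub>L real) a b. blinfun_apply (functional_mult a' a) b = a' (a * b)"
    unfolding f1 by (simp add: gen_apply[OF bm])
  have f2: "bidual_functional_mult = (\<lambda>a z. Blinfun (\<lambda>x. blinfun_apply a (functional_mult z x)))"
    by (intro ext) (simp add: bidual_functional_mult_def)
  have bf2: "bounded_bilinear (bidual_functional_mult :: (('a \<Rightarrow>\<^sub>L real) \<Rightarrow>\<^sub>L real) \<Rightarrow> _)"
    unfolding f2 by (rule gen_bil[OF bf1])
  have af2: "\<And>(b''::('a \<Rightarrow>\<^sub>L real) \<Rightarrow>\<^sub>L real) a' a. blinfun_apply (bidual_functional_mult b'' a') a = b'' (functional_mult a' a)"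
    unfolding f2 by (simp add: gen_apply[OF bf1])
  have f3: "arens1 = (\<lambda>a z. Blinfun (\<lambda>x. blinfun_apply a (bidual_functional_mult z x)))"
    by (intro ext) (simp add: arens1_def)
  have af3: "\<And>(a''::('a \<Rightarrow>\<^sub>L real) \<Rightarrow>\<^sub>L real) b'' a'. blinfun_apply (arens1 a'' b'') a' = a'' (bidual_functional_mult b'' a')"
    unfolding f3 by (simp add: gen_apply[OF bf2])
  have ac: "\<And>(a::'a) a'. blinfun_apply (canon a) a' = a' a"
    unfolding canon_def by (simp add: bounded_linear_Blinfun_apply blinfun.bounded_linear_left)
  have dra: "\<And>y' b. dual_right_act pl y' b = arens_star pl y' b"
    by (simp add: dual_right_act_def arens_star_def)
  have key: "\<And>y' b c. arens_star pl (arens_star pl y' b) c = arens_star pl y' (b * c)"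
    by (intro blinfun_eqI) (simp add: a1 assoc)
  have key2: "\<And>y'' y' b. arens_star2 pl y'' (arens_star pl y' b) = functional_mult (arens_star2 pl y'' y') b"
    by (intro blinfun_eqI) (simp add: a2 af1 key)
  show ?thesis
  proof (intro set_eqI iffI UNIV_I)
    fix a'' :: "('a \<Rightarrow>\<^sub>L real) \<Rightarrow>\<^sub>L real"
    show "a'' \<in> topological_center1 pl"
      unfolding topological_center1_def ws_eq mem_Collect_eq continuous_on_strong_operator_topo_iff_coordinatewise
    proof
      fix x' :: "'x \<Rightarrow>\<^sub>L real"
      obtain y' b where xb: "x' = dual_right_act pl y' b" using factors by blast
      have "arens1 (canon b) a'' \<in> topological_center1 pl" using center by blast
      then have c: "continuous_map strong_operator_topology euclidean
          (\<lambda>y''. blinfun_apply (arens_star3 pl (arens1 (canon b) a'') y'') y')"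
        unfolding topological_center1_def ws_eq mem_Collect_eq continuous_on_strong_operator_topo_iff_coordinatewise
        by blast
      have "(\<lambda>y''. blinfun_apply (arens_star3 pl a'' y'') x') =
            (\<lambda>y''. blinfun_apply (arens_star3 pl (arens1 (canon b) a'') y'') y')"
        by (intro ext) (simp add: xb dra a3 key2 af3 ac af2)
      with c show "continuous_map strong_operator_topology euclidean
          (\<lambda>y''. blinfun_apply (arens_star3 pl a'' y'') x')" by simp
    qed
  qed
qed

end
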